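(* Let $A$ be any (possibly randomized) online algorithm for Machine Covering on $m$ machines that is $c$-competitive in the adversarial model when it knows the input length $n$ beforehand. Then there is an online strategy $B$ that does not know $n$ and is $c$-competitive in the adversarial model. If $A$ is deterministic, $B$ can be chosen deterministic as well.
   Context: Machine Covering: jobs with non-negative sizes are assigned to $m$ identical parallel machines, maximizing the minimum machine load; $\mathrm{OPT}$ denotes the optimal offline minimum load. Computability is ignored. A deterministic online algorithm that does not know $n$ is a function mapping every finite job sequence $J_1,\dots,J_{n'}$ to the machine onto which $J_{n'}$ is scheduled; a deterministic online algorithm that knows $n$ maps tuples $(n,J_1,\dots,J_{n'})$ with $n\ge n'$ to the machine onto which $J_{n'}$ is scheduled, where $n$ is the total input length. A randomized online algorithm is a probability distribution over deterministic ones. An algorithm is $c$-competitive in the adversarial model if for every input sequence (in every order) its expected minimum load is at least $\mathrm{OPT}/c$. *)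

theory Defs
  imports "HOL-Probability.Probability"
begin

definition nonneg_input :: "real list \<Rightarrow> bool" where
  "nonneg_input xs \<longleftrightarrow> (\<forall>x\<in>set xs. 0 \<le> x)"

definition mach_load :: "(nat \<Rightarrow> nat) \<Rightarrow> real list \<Rightarrow> nat \<Rightarrow> real" where
  "mach_load asg xs j = (\<Sum>i\<in>{i. i < length xs \<and> asg i = j}. xs ! i)"

definition min_load :: "nat \<Rightarrow> (nat \<Rightarrow> nat) \<Rightarrow> real list \<Rightarrow> real" where
  "min_load m asg xs = Min ((\<lambda>j. mach_load asg xs j) ` {..<m})"

definition OPT :: "nat \<Rightarrow> real list \<Rightarrow> real" where
  "OPT m xs = Max ((\<lambda>asg. min_load m asg xs) ` ({..<length xs} \<rightarrow>\<^sub>E {..<m}))"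

text \<open>Deterministic online algorithm not knowing n: maps the prefix J_1..J_n'
  to the machine of J_n'.\<close>
definition det_alg :: "nat \<Rightarrow> (real list \<Rightarrow> nat) \<Rightarrow> bool" where
  "det_alg m D \<longleftrightarrow> (\<forall>xs. xs \<noteq> [] \<and> nonneg_input xs \<longrightarrow> D xs < m)"

text \<open>Deterministic online algorithm knowing n: maps (n, J_1..J_n') with n \<ge> n'.\<close>
definition det_alg_n :: "nat \<Rightarrow> (nat \<Rightarrow> real list \<Rightarrow> nat) \<Rightarrow> bool" where
  "det_alg_n m D \<longleftrightarrow>
     (\<forall>n xs. xs \<noteq> [] \<and> length xs \<le> n \<and> nonneg_input xs \<longrightarrow> D n xs < m)"

definition alg_min_load :: "nat \<Rightarrow> (real list \<Rightarrow> nat) \<Rightarrow> real list \<Rightarrow> real" where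
  "alg_min_load m D xs = min_load m (\<lambda>i. D (take (Suc i) xs)) xs"

definition alg_n_min_load :: "nat \<Rightarrow> (nat \<Rightarrow> real list \<Rightarrow> nat) \<Rightarrow> real list \<Rightarrow> real" where
  "alg_n_min_load m D xs = min_load m (\<lambda>i. D (length xs) (take (Suc i) xs)) xs"

text \<open>Randomized algorithms: probability distributions over deterministic ones.
  Evaluating the algorithm on any prefix must be a random variable.\<close>
definition rand_alg :: "nat \<Rightarrow> (real list \<Rightarrow> nat) measure \<Rightarrow> bool" where
  "rand_alg m M \<longleftrightarrow> prob_space M \<and> (\<forall>D\<in>space M. det_alg m D) \<and>
     (\<forall>xs. (\<lambda>D. D xs) \<in> measurable M (count_space UNIV))"

definition rand_alg_n :: "nat \<Rightarrow> (nat \<Rightarrow> real list \<Rightarrow> nat) measure \<Rightarrow> bool" where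
  "rand_alg_n m M \<longleftrightarrow> prob_space M \<and> (\<forall>D\<in>space M. det_alg_n m D) \<and>
     (\<forall>n xs. (\<lambda>D. D n xs) \<in> measurable M (count_space UNIV))"

definition det_competitive :: "nat \<Rightarrow> real \<Rightarrow> (real list \<Rightarrow> nat) \<Rightarrow> bool" where
  "det_competitive m c D \<longleftrightarrow>
     (\<forall>xs. nonneg_input xs \<longrightarrow> alg_min_load m D xs \<ge> OPT m xs / c)"

definition det_competitive_n :: "nat \<Rightarrow> real \<Rightarrow> (nat \<Rightarrow> real list \<Rightarrow> nat) \<Rightarrow> bool" where
  "det_competitive_n m c D \<longleftrightarrow>
     (\<forall>xs. nonneg_input xs \<longrightarrow> alg_n_min_load m D xs \<ge> OPT m xs / c)"

definition rand_competitive :: "nat \<Rightarrow> real \<Rightarrow> (real list \<Rightarrow> nat) measure \<Rightarrow> bool" where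
  "rand_competitive m c M \<longleftrightarrow>
     (\<forall>xs. nonneg_input xs \<longrightarrow>
        (\<integral>\<^sup>+ D. ennreal (alg_min_load m D xs) \<partial>M) \<ge> ennreal (OPT m xs / c))"

definition rand_competitive_n :: "nat \<Rightarrow> real \<Rightarrow> (nat \<Rightarrow> real list \<Rightarrow> nat) measure \<Rightarrow> bool" where
  "rand_competitive_n m c M \<longleftrightarrow>
     (\<forall>xs. nonneg_input xs \<longrightarrow>
        (\<integral>\<^sup>+ D. ennreal (alg_n_min_load m D xs) \<partial>M) \<ge> ennreal (OPT m xs / c))"

end

theory Submission
  imports Defs
begin
(* Reduction: algorithms knowing n yield algorithms not knowing n, via compactness. *)


lemma cluster:
  fixes v :: "nat \<Rightarrow> 'i \<Rightarrow> real"
  assumes bnd: "\<And>N i. v N i \<in> {0..R}"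
  and cl: "\<And>j. j \<in> J \<Longrightarrow> closed (C j)"
  and ev: "\<And>j. j \<in> J \<Longrightarrow> \<exists>N0. \<forall>N\<ge>N0. v N \<in> C j"
  shows "\<exists>F. \<forall>j\<in>J. F \<in> C j"
proof -
  define K where "K = PiE (UNIV::'i set) (\<lambda>_. {0..R})"
  have "compactin (product_topology (\<lambda>_. euclidean) UNIV) K"
    unfolding K_def by (subst compactin_PiE) auto
  then have cK: "compact K" by (simp add: euclidean_product_topology)
  define F where "F = filtermap v sequentially"
  have Fnb: "F \<noteq> bot" unfolding F_def by (simp add: filtermap_bot_iff)
  have "eventually (\<lambda>x. x \<in> K) F" unfolding F_def eventually_filtermap K_def
    using bnd by (auto simp: PiE_iff)
  then obtain x where "x \<in> K" and nb: "inf (nhds x) F \<noteq> bot"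
    using cK Fnb unfolding compact_filter by blast
  have "x \<in> C j" if jJ: "j \<in> J" for j
  proof (rule ccontr)
    assume "x \<notin> C j"
    have "open (- C j)" using cl[OF jJ] by (simp add: open_Compl)
    then have e1: "eventually (\<lambda>y. y \<notin> C j) (nhds x)"
      using eventually_nhds_in_open[of "- C j" x] \<open>x \<notin> C j\<close> by auto
    obtain N0 where "\<forall>N\<ge>N0. v N \<in> C j" using ev[OF jJ] by blast
    then have e2: "eventually (\<lambda>y. y \<in> C j) F" unfolding F_def eventually_filtermap
      eventually_sequentially by blast
    have "eventually (\<lambda>_. False) (inf (nhds x) F)"
      unfolding eventually_inf using e1 e2 by blast
    then show False using nb by (simp add: eventually_False)
  qed
  then show ?thesis by blast
qed

lemma min_load_cong:
  assumes "\<And>i. i < length xs \<Longrightarrow> f i = g i"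
  shows "min_load m f xs = min_load m g xs"
proof -
  have "mach_load f xs j = mach_load g xs j" for j
    unfolding mach_load_def using assms by (metis (mono_tags, lifting))
  then show ?thesis unfolding min_load_def by simp
qed

lemma mach_load_zeros:
  "mach_load f (xs @ replicate r 0) j = mach_load f xs j"
  unfolding mach_load_def
  by (rule sum.mono_neutral_cong_right) (auto simp: nth_append)

lemma min_load_zeros:
  "min_load m f (xs @ replicate r 0) = min_load m f xs"
  unfolding min_load_def by (simp add: mach_load_zeros)

lemma OPT_zeros:
  assumes "m \<ge> 1"
  shows "OPT m (xs @ replicate r 0) = OPT m xs"
proof -
  let ?k = "length xs"
  have A: "(\<lambda>asg. min_load m asg (xs @ replicate r 0)) ` ({..<length (xs @ replicate r 0)} \<rightarrow>\<^sub>E {..<m})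
      = (\<lambda>asg. min_load m asg xs) ` ({..<?k + r} \<rightarrow>\<^sub>E {..<m})"
    by (simp add: min_load_zeros)
  have B: "(\<lambda>asg. min_load m asg xs) ` ({..<?k + r} \<rightarrow>\<^sub>E {..<m})
      = (\<lambda>asg. min_load m asg xs) ` ({..<?k} \<rightarrow>\<^sub>E {..<m})" (is "?A = ?B")
  proof (rule set_eqI, rule iffI)
    fix y assume "y \<in> ?A"
    then obtain asg where asg: "asg \<in> {..<?k + r} \<rightarrow>\<^sub>E {..<m}" and y: "y = min_load m asg xs"
      by blast
    define g where "g = restrict asg {..<?k}"
    have "g \<in> {..<?k} \<rightarrow>\<^sub>E {..<m}" 
      using asg unfolding g_def PiE_def Pi_def extensional_def by auto
    moreover have "min_load m g xs = y" unfolding y g_def by (rule min_load_cong) auto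
    ultimately show "y \<in> ?B" by (metis image_eqI)
  next
    fix y assume "y \<in> ?B"
    then obtain asg where asg: "asg \<in> {..<?k} \<rightarrow>\<^sub>E {..<m}" and y: "y = min_load m asg xs"
      by blast
    define g where "g = (\<lambda>i. if i < ?k then asg i else if i < ?k + r then 0 else undefined)"
    have "g \<in> {..<?k + r} \<rightarrow>\<^sub>E {..<m}" 
      using asg assms unfolding g_def PiE_def Pi_def extensional_def by auto
    moreover have "min_load m g xs = y" unfolding y g_def
      by (rule min_load_cong) auto
    ultimately show "y \<in> ?A" by (metis image_eqI)
  qed
  show ?thesis unfolding OPT_def A B ..
qed

lemma min_load_nonneg:
  assumes "m \<ge> 1" "nonneg_input xs"
  shows "min_load m f xs \<ge> 0"
proof -
  have "mach_load f xs j \<ge> 0" for j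
    unfolding mach_load_def using assms(2) by (intro sum_nonneg) (auto simp: nonneg_input_def)
  moreover have "0 \<in> {..<m}" using assms(1) by simp
  then have "{..<m} \<noteq> {}" by blast
  ultimately show ?thesis unfolding min_load_def
    by (subst Min_ge_iff) auto
qed

lemma nonneg_take: "nonneg_input xs \<Longrightarrow> nonneg_input (take n xs)"
  by (auto simp: nonneg_input_def dest: in_set_takeD)

lemma nonneg_zeros: "nonneg_input xs \<Longrightarrow> nonneg_input (xs @ replicate r 0)"
  by (auto simp: nonneg_input_def)

lemma take_zeros: "i < length xs \<Longrightarrow> take (Suc i) (xs @ replicate r 0) = take (Suc i) xs"
  by simp

lemma m_pos_n: "det_alg_n m A \<Longrightarrow> m \<ge> 1"
proof -
  assume "det_alg_n m A"
  then have "A 1 [0] < m" unfolding det_alg_n_def nonneg_input_def by auto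
  then show ?thesis by simp
qed

definition LL :: "nat \<Rightarrow> nat \<Rightarrow> nat list set" where
  "LL m k = {a. length a = k \<and> set a \<subseteq> {..<m}}"

lemma finite_LL: "finite (LL m k)"
proof -
  have "LL m k \<subseteq> {a. set a \<subseteq> {..<m} \<and> length a = k}" unfolding LL_def by auto
  then show ?thesis using finite_lists_length_eq[of "{..<m}" k] finite_subset by auto
qed

lemma LL_nth: "a \<in> LL m k \<Longrightarrow> i < k \<Longrightarrow> a ! i < m"
  unfolding LL_def by (metis (mono_tags, lifting) lessThan_iff mem_Collect_eq nth_mem subsetD)

definition ml :: "nat \<Rightarrow> nat list \<Rightarrow> real list \<Rightarrow> real" where
  "ml m a xs = min_load m (\<lambda>i. a ! i) xs"



lemma closed_pt: "closed {f :: 'i \<Rightarrow> real. f p = r}"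
  by (rule closed_Collect_eq) (auto intro: continuous_on_product_coordinates)

lemma det_part:
  assumes A: "det_alg_n m A" and comp: "det_competitive_n m c A"
  shows "\<exists>B. det_alg m B \<and> det_competitive m c B"
proof -
  have m1: "m \<ge> 1" using m_pos_n[OF A] .
  define v where "v N xs = real (if A N xs < m then A N xs else 0)" for N xs
  define C where "C xs = {f. (\<forall>i<length xs. f (take (Suc i) xs) \<in> real ` {..<m}) \<and>
      OPT m xs / c \<le> min_load m (\<lambda>i. nat \<lfloor>f (take (Suc i) xs)\<rfloor>) xs}" for xs
  have bnd: "v N xs \<in> {0..real m}" for N xs unfolding v_def by auto
  have cl: "closed (C xs)" if "xs \<in> {xs. nonneg_input xs}" for xs
  proof -
    let ?k = "length xs"
    let ?G = "{a \<in> LL m ?k. OPT m xs / c \<le> ml m a xs}"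
    have eq: "C xs = (\<Union>a\<in>?G. \<Inter>i\<in>{..<?k}. {f. f (take (Suc i) xs) = real (a ! i)})"
    proof (rule set_eqI, rule iffI)
      fix f assume f: "f \<in> C xs"
      define a where "a = map (\<lambda>i. nat \<lfloor>f (take (Suc i) xs)\<rfloor>) [0..<?k]"
      have fi: "f (take (Suc i) xs) = real (a ! i)" "a ! i < m" if hi: "i < ?k" for i
      proof -
        obtain j where "j < m" "f (take (Suc i) xs) = real j" using f hi unfolding C_def by blast
        then show "f (take (Suc i) xs) = real (a ! i)" "a ! i < m" unfolding a_def using hi by auto
      qed
      have la: "length a = ?k" unfolding a_def by simp
      have "a \<in> LL m ?k" unfolding LL_def using fi(2) la
        by (auto simp: in_set_conv_nth)
      moreover have "ml m a xs = min_load m (\<lambda>i. nat \<lfloor>f (take (Suc i) xs)\<rfloor>) xs"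
        unfolding ml_def by (rule min_load_cong) (simp add: a_def)
      ultimately have "a \<in> ?G" using f unfolding C_def by auto
      then show "f \<in> (\<Union>a\<in>?G. \<Inter>i\<in>{..<?k}. {f. f (take (Suc i) xs) = real (a ! i)})"
        using fi(1) by blast
    next
      fix f assume "f \<in> (\<Union>a\<in>?G. \<Inter>i\<in>{..<?k}. {f. f (take (Suc i) xs) = real (a ! i)})"
      then obtain a where a: "a \<in> ?G" and fa: "\<And>i. i < ?k \<Longrightarrow> f (take (Suc i) xs) = real (a ! i)"
        by blast
      have alt: "a ! i < m" if "i < ?k" for i using a that LL_nth by blast
      have "ml m a xs = min_load m (\<lambda>i. nat \<lfloor>f (take (Suc i) xs)\<rfloor>) xs"
        unfolding ml_def by (rule min_load_cong) (simp add: fa)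
      then show "f \<in> C xs" unfolding C_def using a fa alt by auto
    qed
    show ?thesis unfolding eq
      by (intro closed_UN ballI closed_INT finite_subset[OF _ finite_LL] closed_pt) auto
  qed
  have ev: "\<exists>N0. \<forall>N\<ge>N0. v N \<in> C xs" if "xs \<in> {xs. nonneg_input xs}" for xs
  proof (intro exI allI impI)
    fix N assume N: "length xs \<le> N"
    let ?k = "length xs"
    have Alt: "A N (take (Suc i) xs) < m" if hi: "i < ?k" for i
    proof -
      have "take (Suc i) xs \<noteq> []" "length (take (Suc i) xs) \<le> N"
           "nonneg_input (take (Suc i) xs)"
        using hi N nonneg_take[of xs] \<open>xs \<in> _\<close> by auto
      then show ?thesis using A unfolding det_alg_n_def by blast
    qed
    then have vv: "v N (take (Suc i) xs) = real (A N (take (Suc i) xs))" if "i < ?k" for i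
      using that unfolding v_def by auto
    define ys where "ys = xs @ replicate (N - ?k) 0"
    have ly: "length ys = N" using N unfolding ys_def by simp
    have "OPT m ys / c \<le> alg_n_min_load m A ys"
      using comp nonneg_zeros \<open>xs \<in> _\<close> unfolding det_competitive_n_def ys_def by auto
    also have "alg_n_min_load m A ys = min_load m (\<lambda>i. A N (take (Suc i) ys)) xs"
      unfolding alg_n_min_load_def ly unfolding ys_def min_load_zeros ..
    also have "\<dots> = min_load m (\<lambda>i. nat \<lfloor>v N (take (Suc i) xs)\<rfloor>) xs"
      by (rule min_load_cong) (simp add: ys_def vv)
    finally have "OPT m xs / c \<le> min_load m (\<lambda>i. nat \<lfloor>v N (take (Suc i) xs)\<rfloor>) xs"
      using OPT_zeros[OF m1] unfolding ys_def by simp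
    then show "v N \<in> C xs" unfolding C_def using vv Alt by auto
  qed
  obtain F where F: "\<forall>xs\<in>{xs. nonneg_input xs}. F \<in> C xs"
    using cluster[of v "real m" "{xs. nonneg_input xs}" C] bnd cl ev by blast
  define B where "B xs = nat \<lfloor>F xs\<rfloor>" for xs
  have "det_alg m B" unfolding det_alg_def
  proof (intro allI impI)
    fix xs :: "real list" assume xs: "xs \<noteq> [] \<and> nonneg_input xs"
    have "\<forall>i<length xs. F (take (Suc i) xs) \<in> real ` {..<m}"
      using F xs unfolding C_def by auto
    then have "F (take (Suc (length xs - 1)) xs) \<in> real ` {..<m}"
      using xs by (metis diff_less length_greater_0_conv zero_less_one)
    moreover have "take (Suc (length xs - 1)) xs = xs" using xs by simp
    ultimately have "F xs \<in> real ` {..<m}" by simp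
    then show "B xs < m" using xs unfolding B_def by auto
  qed
  moreover have "det_competitive m c B" unfolding det_competitive_def alg_min_load_def B_def
    using F unfolding C_def by auto
  ultimately show ?thesis by blast
qed



lemma map_upt_eq: "(map g [0..<k] = a) \<longleftrightarrow> (length a = k \<and> (\<forall>i\<in>{..<k}. g i = a ! i))"
proof
  assume "map g [0..<k] = a" then show "length a = k \<and> (\<forall>i\<in>{..<k}. g i = a ! i)" by auto
next
  assume h: "length a = k \<and> (\<forall>i\<in>{..<k}. g i = a ! i)"
  show "map g [0..<k] = a" by (rule nth_equalityI) (use h in auto)
qed

lemma map_meas:
  fixes f :: "nat \<Rightarrow> 'a \<Rightarrow> 'b::countable"
  assumes fm: "\<And>i. i < k \<Longrightarrow> f i \<in> measurable M (count_space UNIV)"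
  shows "(\<lambda>x. map (\<lambda>i. f i x) [0..<k]) \<in> measurable M (count_space UNIV)"
proof (subst measurable_count_space_eq2_countable, intro conjI ballI)
  show "(\<lambda>x. map (\<lambda>i. f i x) [0..<k]) \<in> space M \<rightarrow> UNIV" by simp
  fix a :: "'b list"
  have eq: "(\<lambda>x. map (\<lambda>i. f i x) [0..<k]) -` {a} \<inter> space M
      = {x\<in>space M. length a = k \<and> (\<forall>i\<in>{..<k}. f i x = a ! i)}"
    by (auto simp: map_upt_eq)
  show "(\<lambda>x. map (\<lambda>i. f i x) [0..<k]) -` {a} \<inter> space M \<in> sets M"
  proof (cases "length a = k")
    case True
    have "{x\<in>space M. \<forall>i\<in>{..<k}. f i x = a ! i} \<in> sets M"
    proof (rule sets.sets_Collect_finite_All)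
      fix i assume "i \<in> {..<k}"
      then have "f i -` {a ! i} \<inter> space M \<in> sets M"
        using measurable_sets[OF fm, of i "{a ! i}"] by auto
      moreover have "f i -` {a ! i} \<inter> space M = {x\<in>space M. f i x = a ! i}" by auto
      ultimately show "{x\<in>space M. f i x = a ! i} \<in> sets M" by simp
    qed simp
    then show ?thesis unfolding eq using True by simp
  next
    case False
    then show ?thesis unfolding eq by simp
  qed
qed

lemma fin_nn:
  assumes X: "X \<in> measurable M (count_space UNIV)" and fin: "finite L"
    and XL: "\<And>x. x \<in> space M \<Longrightarrow> X x \<in> L"
  shows "(\<integral>\<^sup>+x. g (X x) \<partial>M) = (\<Sum>a\<in>L. g a * emeasure M {x\<in>space M. X x = a})"
proof -
  have sets: "{x\<in>space M. X x = a} \<in> sets M" for a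
  proof -
    have "X -` {a} \<inter> space M \<in> sets M" using measurable_sets[OF X, of "{a}"] by auto
    moreover have "X -` {a} \<inter> space M = {x\<in>space M. X x = a}" by auto
    ultimately show ?thesis by simp
  qed
  have "(\<integral>\<^sup>+x. g (X x) \<partial>M) = (\<integral>\<^sup>+x. (\<Sum>a\<in>L. g a * indicator {x\<in>space M. X x = a} x) \<partial>M)"
  proof (rule nn_integral_cong)
    fix x assume x: "x \<in> space M"
    have "(\<Sum>a\<in>L. g a * indicator {x\<in>space M. X x = a} x) = (\<Sum>a\<in>L. if a = X x then g a else 0)"
      by (rule sum.cong) (auto simp: x indicator_def)
    also have "\<dots> = g (X x)" using XL[OF x] fin by (simp add: sum.delta')
    finally show "g (X x) = (\<Sum>a\<in>L. g a * indicator {x\<in>space M. X x = a} x)" by simp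
  qed
  also have "\<dots> = (\<Sum>a\<in>L. \<integral>\<^sup>+x. g a * indicator {x\<in>space M. X x = a} x \<partial>M)"
    by (rule nn_integral_sum) (use sets in auto)
  also have "\<dots> = (\<Sum>a\<in>L. g a * emeasure M {x\<in>space M. X x = a})"
    by (rule sum.cong) (auto simp: nn_integral_cmult_indicator sets)
  finally show ?thesis .
qed

lemma closed_ball_fin:
  assumes "\<And>a. a \<in> S \<Longrightarrow> closed {x. P a x}"
  shows "closed {x. \<forall>a\<in>S. P a x}"
proof -
  have "{x. \<forall>a\<in>S. P a x} = (\<Inter>a\<in>S. {x. P a x})" by auto
  then show ?thesis using assms by auto
qed

lemma cont_coord: "continuous_on UNIV (\<lambda>f :: 'i \<Rightarrow> real. f p)"
  by simp

definition CP :: "nat \<Rightarrow> real \<Rightarrow> real list \<Rightarrow> (real list \<times> nat list \<Rightarrow> real) set" where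
 "CP m c xs = {f. (\<forall>a\<in>LL m (length xs). 0 \<le> f (xs,a)) \<and> (\<Sum>a\<in>LL m (length xs). f (xs,a)) = 1 \<and>
    OPT m xs / c \<le> (\<Sum>a\<in>LL m (length xs). f (xs,a) * ml m a xs) \<and>
    (xs \<noteq> [] \<longrightarrow> (\<forall>a\<in>LL m (length xs - 1). f (butlast xs, a) = (\<Sum>j<m. f (xs, a @ [j]))))}"

lemma closed_CP: "closed (CP m c xs)"
proof -
  have c1: "closed {f :: real list \<times> nat list \<Rightarrow> real. \<forall>a\<in>LL m (length xs). 0 \<le> f (xs,a)}"
    by (intro closed_ball_fin closed_Collect_le continuous_on_const cont_coord)
  have c2: "closed {f :: real list \<times> nat list \<Rightarrow> real. (\<Sum>a\<in>LL m (length xs). f (xs,a)) = 1}"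
    by (intro closed_Collect_eq continuous_on_sum continuous_on_const cont_coord)
  have c3: "closed {f :: real list \<times> nat list \<Rightarrow> real. OPT m xs / c \<le> (\<Sum>a\<in>LL m (length xs). f (xs,a) * ml m a xs)}"
    by (intro closed_Collect_le continuous_on_sum continuous_on_const continuous_on_mult cont_coord)
  have c4: "closed {f :: real list \<times> nat list \<Rightarrow> real. xs \<noteq> [] \<longrightarrow> (\<forall>a\<in>LL m (length xs - 1). f (butlast xs, a) = (\<Sum>j<m. f (xs, a @ [j])))}"
    by (intro closed_Collect_imp closed_ball_fin closed_Collect_eq continuous_on_sum cont_coord)
       (cases "xs = []", auto)
  show ?thesis unfolding CP_def
    by (intro closed_Collect_conj c1 c2 c3 c4)
qed



definition trN :: "nat \<Rightarrow> real list \<Rightarrow> (nat \<Rightarrow> real list \<Rightarrow> nat) \<Rightarrow> nat list" where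
  "trN N ys D = map (\<lambda>i. D N (take (Suc i) ys)) [0..<length ys]"

lemma trN_snoc: "trN N (ys @ [x]) D = trN N ys D @ [D N (ys @ [x])]"
  unfolding trN_def by simp

lemma LL_snoc: "a \<in> LL m k \<Longrightarrow> j < m \<Longrightarrow> a @ [j] \<in> LL m (Suc k)"
  unfolding LL_def by auto

lemma rand_to_P:
  assumes MA: "rand_alg_n m MA" and comp: "rand_competitive_n m c MA"
  shows "m \<ge> 1 \<and> (\<exists>P. \<forall>xs. nonneg_input xs \<longrightarrow> P \<in> CP m c xs)"
proof -
  interpret prob_space MA using MA unfolding rand_alg_n_def by auto
  have evm: "(\<lambda>D. D n xs) \<in> measurable MA (count_space UNIV)" for n xs
    using MA unfolding rand_alg_n_def by auto
  have dA: "det_alg_n m D" if "D \<in> space MA" for D using MA that unfolding rand_alg_n_def by auto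
  obtain D0 where "D0 \<in> space MA" using not_empty by blast
  then have m1: "m \<ge> 1" using m_pos_n dA by blast
  have trm: "trN N ys \<in> measurable MA (count_space UNIV)" for N ys
    unfolding trN_def by (rule map_meas) (rule evm)
  have sets: "{D\<in>space MA. trN N ys D = a} \<in> sets MA" for N ys a
  proof -
    have "trN N ys -` {a} \<inter> space MA \<in> sets MA" using measurable_sets[OF trm, of "{a}"] by auto
    moreover have "trN N ys -` {a} \<inter> space MA = {D\<in>space MA. trN N ys D = a}" by auto
    ultimately show ?thesis by simp
  qed
  have Dlt: "D N ys < m" if "D \<in> space MA" "nonneg_input ys" "ys \<noteq> []" "length ys \<le> N" for D N ys
    using dA[OF that(1)] that unfolding det_alg_n_def by blast
  have inL: "trN N ys D \<in> LL m (length ys)"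
    if D: "D \<in> space MA" and ys: "nonneg_input ys" "length ys \<le> N" for D N ys
  proof -
    have "D N (take (Suc i) ys) < m" if "i < length ys" for i
      using Dlt[OF D nonneg_take[OF ys(1)], of "Suc i" N] ys that by (cases "ys = []") auto
    then show ?thesis unfolding LL_def trN_def by (auto simp: in_set_conv_nth)
  qed
  define v where "v N p = measure MA {D\<in>space MA. trN N (fst p) D = snd p}" for N p
  have bnd: "v N p \<in> {0..1}" for N p unfolding v_def by auto
  have ev: "\<exists>N0. \<forall>N\<ge>N0. v N \<in> CP m c xs" if xs: "xs \<in> {xs. nonneg_input xs}" for xs
  proof (intro exI allI impI)
    fix N assume N: "length xs \<le> N"
    let ?k = "length xs"
    let ?L = "LL m ?k"
    have c1: "\<forall>a\<in>?L. 0 \<le> v N (xs, a)" unfolding v_def by simp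
    have U: "space MA = (\<Union>a\<in>?L. {D\<in>space MA. trN N xs D = a})"
      using inL[of _ xs N] xs N by auto
    have c2: "(\<Sum>a\<in>?L. v N (xs, a)) = 1"
    proof -
      have "1 = measure MA (\<Union>a\<in>?L. {D\<in>space MA. trN N xs D = a})"
        using U prob_space by simp
      also have "\<dots> = (\<Sum>a\<in>?L. measure MA {D\<in>space MA. trN N xs D = a})"
        by (rule measure_finite_Union) (auto simp: finite_LL sets disjoint_family_on_def)
      finally show ?thesis unfolding v_def by simp
    qed
    have c4: "\<forall>a\<in>LL m (?k - 1). v N (butlast xs, a) = (\<Sum>j<m. v N (xs, a @ [j]))"
      if ne: "xs \<noteq> []"
    proof
      fix a assume a: "a \<in> LL m (?k - 1)"
      define ys where "ys = butlast xs"
      have xsd: "xs = ys @ [last xs]" unfolding ys_def using ne by simp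
      have "{D\<in>space MA. trN N ys D = a} = (\<Union>j\<in>{..<m}. {D\<in>space MA. trN N xs D = a @ [j]})"
      proof (rule set_eqI, rule iffI)
        fix D assume D: "D \<in> {D\<in>space MA. trN N ys D = a}"
        have "D N xs < m" using Dlt[of D xs N] D xs ne N by auto
        moreover have "trN N xs D = a @ [D N xs]" using D by (subst xsd, subst trN_snoc) (simp add: xsd[symmetric])
        ultimately show "D \<in> (\<Union>j\<in>{..<m}. {D\<in>space MA. trN N xs D = a @ [j]})" using D by auto
      next
        fix D assume "D \<in> (\<Union>j\<in>{..<m}. {D\<in>space MA. trN N xs D = a @ [j]})"
        then obtain j where "D \<in> space MA" "trN N xs D = a @ [j]" by blast
        then have "trN N ys D @ [D N (ys @ [last xs])] = a @ [j]" using trN_snoc xsd by metis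
        then show "D \<in> {D\<in>space MA. trN N ys D = a}" using \<open>D \<in> space MA\<close> by simp
      qed
      then have "measure MA {D\<in>space MA. trN N ys D = a}
          = (\<Sum>j<m. measure MA {D\<in>space MA. trN N xs D = a @ [j]})"
        by (simp only:) (rule measure_finite_Union, auto simp: sets disjoint_family_on_def)
      then show "v N (butlast xs, a) = (\<Sum>j<m. v N (xs, a @ [j]))" unfolding v_def ys_def by simp
    qed
    have c3: "OPT m xs / c \<le> (\<Sum>a\<in>?L. v N (xs, a) * ml m a xs)"
    proof -
      define ys where "ys = xs @ replicate (N - ?k) 0"
      have ly: "length ys = N" using N unfolding ys_def by simp
      have "ennreal (OPT m ys / c) \<le> (\<integral>\<^sup>+ D. ennreal (alg_n_min_load m D ys) \<partial>MA)"
        using comp nonneg_zeros xs unfolding rand_competitive_n_def ys_def by auto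
      also have "\<dots> = (\<integral>\<^sup>+ D. ennreal (ml m (trN N xs D) xs) \<partial>MA)"
      proof (rule nn_integral_cong)
        fix D
        have "alg_n_min_load m D ys = min_load m (\<lambda>i. D N (take (Suc i) ys)) xs"
          unfolding alg_n_min_load_def ly unfolding ys_def min_load_zeros ..
        also have "\<dots> = ml m (trN N xs D) xs" unfolding ml_def trN_def
          by (rule min_load_cong) (simp add: ys_def)
        finally show "ennreal (alg_n_min_load m D ys) = ennreal (ml m (trN N xs D) xs)" by simp
      qed
      also have "\<dots> = (\<Sum>a\<in>?L. ennreal (ml m a xs) * emeasure MA {D\<in>space MA. trN N xs D = a})"
        by (rule fin_nn[OF trm finite_LL]) (use inL xs N in auto)
      also have "\<dots> = (\<Sum>a\<in>?L. ennreal (v N (xs, a) * ml m a xs))"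
        unfolding v_def
      proof (rule sum.cong)
        fix a assume "a \<in> ?L"
        have "0 \<le> ml m a xs" using min_load_nonneg[OF m1] xs unfolding ml_def by auto
        then show "ennreal (ml m a xs) * emeasure MA {D\<in>space MA. trN N xs D = a}
          = ennreal (measure MA {D\<in>space MA. trN N (fst (xs, a)) D = snd (xs, a)} * ml m a xs)"
          by (simp add: emeasure_eq_measure ennreal_mult mult.commute)
      qed simp
      also have "\<dots> = ennreal (\<Sum>a\<in>?L. v N (xs, a) * ml m a xs)"
        using min_load_nonneg[OF m1] xs unfolding v_def ml_def by (intro sum_ennreal) auto
      finally have "ennreal (OPT m ys / c) \<le> ennreal (\<Sum>a\<in>?L. v N (xs, a) * ml m a xs)" .
      moreover have "0 \<le> (\<Sum>a\<in>?L. v N (xs, a) * ml m a xs)"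
        using min_load_nonneg[OF m1] xs unfolding v_def ml_def by (intro sum_nonneg) auto
      ultimately have "OPT m ys / c \<le> (\<Sum>a\<in>?L. v N (xs, a) * ml m a xs)" by simp
      then show ?thesis unfolding ys_def OPT_zeros[OF m1] .
    qed
    show "v N \<in> CP m c xs" unfolding CP_def using c1 c2 c3 c4 by blast
  qed
  obtain F where "\<forall>xs\<in>{xs. nonneg_input xs}. F \<in> CP m c xs"
    using cluster[of v 1 "{xs. nonneg_input xs}" "CP m c"] bnd closed_CP ev by blast
  then show ?thesis using m1 by auto
qed



definition lo :: "(real list \<times> nat list \<Rightarrow> real) \<Rightarrow> real list \<Rightarrow> nat list \<Rightarrow> real" where
  "lo P xs a = (\<Sum>i<length xs. \<Sum>j<a!i. P (take (Suc i) xs, take i a @ [j]))"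

definition Iv :: "(real list \<times> nat list \<Rightarrow> real) \<Rightarrow> real list \<Rightarrow> nat list \<Rightarrow> real set" where
  "Iv P xs a = {lo P xs a ..< lo P xs a + P (xs, a)}"

lemma lo_nil: "lo P [] a = 0" unfolding lo_def by simp

lemma lo_snoc:
  assumes "length a = length xs"
  shows "lo P (xs @ [x]) (a @ [j]) = lo P xs a + (\<Sum>j'<j. P (xs @ [x], a @ [j']))"
proof -
  have "lo P (xs @ [x]) (a @ [j]) = (\<Sum>i<length xs. \<Sum>jj<(a @ [j])!i. P (take (Suc i) (xs @ [x]), take i (a @ [j]) @ [jj]))
        + (\<Sum>j'<(a @ [j])!(length xs). P (take (Suc (length xs)) (xs @ [x]), take (length xs) (a @ [j]) @ [j']))"
    unfolding lo_def by simp
  also have "(\<Sum>i<length xs. \<Sum>jj<(a @ [j])!i. P (take (Suc i) (xs @ [x]), take i (a @ [j]) @ [jj])) = lo P xs a"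
    unfolding lo_def by (rule sum.cong) (use assms in \<open>auto simp: nth_append\<close>)
  also have "(\<Sum>j'<(a @ [j])!(length xs). P (take (Suc (length xs)) (xs @ [x]), take (length xs) (a @ [j]) @ [j']))
      = (\<Sum>j'<j. P (xs @ [x], a @ [j']))" using assms[symmetric] by simp
  finally show ?thesis .
qed

lemma step_find:
  fixes f :: "nat \<Rightarrow> real"
  shows "f 0 \<le> t \<Longrightarrow> t < f n \<Longrightarrow> \<exists>j<n. f j \<le> t \<and> t < f (Suc j)"
proof (induction n)
  case 0 then show ?case by simp
next
  case (Suc n)
  show ?case
  proof (cases "t < f n")
    case True then show ?thesis using Suc by (metis less_Suc_eq)
  next
    case False then show ?thesis using Suc by auto
  qed
qed

lemma LL_Suc_decomp:
  assumes "b \<in> LL m (Suc k)"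
  obtains a j where "b = a @ [j]" "a \<in> LL m k" "j < m"
proof -
  have ne: "b \<noteq> []" using assms unfolding LL_def by auto
  have "b = butlast b @ [last b]" using ne by simp
  moreover have "butlast b \<in> LL m k" using assms unfolding LL_def
    by (auto dest: in_set_butlastD)
  moreover have "last b < m" using assms last_in_set[OF ne] unfolding LL_def by auto
  ultimately show ?thesis using that by blast
qed


lemma LL_0: "LL m 0 = {[]}" unfolding LL_def by auto

lemma take_LL: "a \<in> LL m k \<Longrightarrow> i \<le> k \<Longrightarrow> take i a \<in> LL m i"
  unfolding LL_def by (auto dest: in_set_takeD)

lemma nonneg_snoc: "nonneg_input (xs @ [x]) \<Longrightarrow> nonneg_input xs"
  unfolding nonneg_input_def by auto

definition sel :: "nat \<Rightarrow> (real list \<times> nat list \<Rightarrow> real) \<Rightarrow> real list \<Rightarrow> real \<Rightarrow> nat list" where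
  "sel m P xs U = (THE a. a \<in> LL m (length xs) \<and> U \<in> Iv P xs a)"

definition Bf :: "nat \<Rightarrow> (real list \<times> nat list \<Rightarrow> real) \<Rightarrow> real \<Rightarrow> real list \<Rightarrow> nat" where
  "Bf m P U xs = (if nonneg_input xs \<and> xs \<noteq> [] \<and> U \<in> {0..<1} then last (sel m P xs U) else 0)"

context
  fixes m :: nat and c :: real and P :: "real list \<times> nat list \<Rightarrow> real"
  assumes m1: "m \<ge> 1" and PC: "\<And>xs. nonneg_input xs \<Longrightarrow> P \<in> CP m c xs"
begin

lemma Pnn: "nonneg_input xs \<Longrightarrow> a \<in> LL m (length xs) \<Longrightarrow> 0 \<le> P (xs, a)"
  using PC unfolding CP_def by blast

lemma Psum: "nonneg_input xs \<Longrightarrow> (\<Sum>a\<in>LL m (length xs). P (xs, a)) = 1"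
  using PC unfolding CP_def by blast

lemma Pcomp: "nonneg_input xs \<Longrightarrow> OPT m xs / c \<le> (\<Sum>a\<in>LL m (length xs). P (xs,a) * ml m a xs)"
  using PC unfolding CP_def by blast

lemma Pcons: "nonneg_input (xs @ [x]) \<Longrightarrow> a \<in> LL m (length xs) \<Longrightarrow> P (xs, a) = (\<Sum>j<m. P (xs @ [x], a @ [j]))"
  using PC[of "xs @ [x]"] unfolding CP_def by auto

lemma S_mono:
  assumes "nonneg_input (xs @ [x])" "a \<in> LL m (length xs)" "j \<le> j'" "j' \<le> m"
  shows "(\<Sum>i<j. P (xs @ [x], a @ [i])) \<le> (\<Sum>i<j'. P (xs @ [x], a @ [i]))"
proof (rule sum_mono2)
  fix b assume "b \<in> {..<j'} - {..<j}"
  then have "b < m" using assms by auto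
  then have "a @ [b] \<in> LL m (length (xs @ [x]))" using assms(2) LL_snoc[of a m _ b] by (simp add: LL_def)
  then show "0 \<le> P (xs @ [x], a @ [b])" using Pnn assms(1) by blast
qed (use assms in auto)

lemma Iv_snoc:
  assumes "a \<in> LL m (length xs)" "j < m"
  shows "Iv P (xs @ [x]) (a @ [j]) = {lo P xs a + (\<Sum>i<j. P (xs @ [x], a @ [i])) ..< lo P xs a + (\<Sum>i<Suc j. P (xs @ [x], a @ [i]))}"
proof -
  have "length a = length xs" using assms unfolding LL_def by auto
  then show ?thesis unfolding Iv_def by (simp add: lo_snoc algebra_simps)
qed

lemma Iv_prefix:
  assumes nn: "nonneg_input (xs @ [x])" and a: "a \<in> LL m (length xs)" and j: "j < m"
  shows "Iv P (xs @ [x]) (a @ [j]) \<subseteq> Iv P xs a"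
proof -
  have "(\<Sum>i<0. P (xs @ [x], a @ [i])) \<le> (\<Sum>i<j. P (xs @ [x], a @ [i]))"
    by (rule S_mono[OF nn a]) (use j in auto)
  moreover have "(\<Sum>i<Suc j. P (xs @ [x], a @ [i])) \<le> (\<Sum>i<m. P (xs @ [x], a @ [i]))"
    by (rule S_mono[OF nn a]) (use j in auto)
  moreover have "length a = length xs" using a unfolding LL_def by auto
  ultimately show ?thesis unfolding Iv_def Pcons[OF nn a, symmetric]
    by (auto simp: lo_snoc)
qed

lemma partition:
  "nonneg_input xs \<Longrightarrow>
    (\<forall>a\<in>LL m (length xs). 0 \<le> lo P xs a \<and> lo P xs a + P (xs, a) \<le> 1) \<and>
    (\<forall>U\<in>{0..<1}. \<exists>a\<in>LL m (length xs). U \<in> Iv P xs a) \<and>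
    (\<forall>a\<in>LL m (length xs). \<forall>b\<in>LL m (length xs). \<forall>U. U \<in> Iv P xs a \<longrightarrow> U \<in> Iv P xs b \<longrightarrow> a = b)"
proof (induction xs rule: rev_induct)
  case Nil
  have "P ([], []) = 1" using Psum[of "[]"] Nil by (simp add: LL_0)
  then show ?case by (simp add: LL_0 lo_nil Iv_def)
next
  case (snoc x xs)
  let ?k = "length xs"
  have nn: "nonneg_input xs" using snoc.prems by (rule nonneg_snoc)
  note IH = snoc.IH[OF nn]
  define S where "S a j = (\<Sum>i<j. P (xs @ [x], a @ [i]))" for a j
  have Sm: "S a j \<le> S a j'" if "a \<in> LL m ?k" "j \<le> j'" "j' \<le> m" for a j j'
    unfolding S_def by (rule S_mono[OF snoc.prems that])
  have Sm_end: "S a m = P (xs, a)" if "a \<in> LL m ?k" for a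
    unfolding S_def using Pcons[OF snoc.prems that] by simp
  have Iv': "Iv P (xs @ [x]) (a @ [j]) = {lo P xs a + S a j ..< lo P xs a + S a (Suc j)}"
    if "a \<in> LL m ?k" "j < m" for a j
    unfolding S_def by (rule Iv_snoc[OF that])
  have lo': "lo P (xs @ [x]) (a @ [j]) = lo P xs a + S a j" if "a \<in> LL m ?k" for a j
    unfolding S_def using that by (intro lo_snoc) (auto simp: LL_def)
  have P': "lo P (xs @ [x]) (a @ [j]) + P (xs @ [x], a @ [j]) = lo P xs a + S a (Suc j)"
    if "a \<in> LL m ?k" for a j
    using lo'[OF that] unfolding S_def by simp
  have p1: "\<forall>b\<in>LL m (length (xs @ [x])). 0 \<le> lo P (xs @ [x]) b \<and> lo P (xs @ [x]) b + P (xs @ [x], b) \<le> 1"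
  proof
    fix b assume "b \<in> LL m (length (xs @ [x]))"
    then obtain a j where b: "b = a @ [j]" and a: "a \<in> LL m ?k" and j: "j < m"
      using LL_Suc_decomp by (metis length_append_singleton)
    have s1: "S a 0 \<le> S a j" "S a (Suc j) \<le> S a m" using Sm[OF a] j by auto
    moreover have s0: "S a 0 = 0" unfolding S_def by simp
    have ih: "0 \<le> lo P xs a" "lo P xs a + P (xs, a) \<le> 1" using IH a by auto
    have "0 \<le> lo P (xs @ [x]) (a @ [j])" unfolding lo'[OF a] using s1 s0 ih by linarith
    moreover have "lo P (xs @ [x]) (a @ [j]) + P (xs @ [x], a @ [j]) \<le> 1"
      unfolding P'[OF a] using s1 ih Sm_end[OF a] by linarith
    ultimately show "0 \<le> lo P (xs @ [x]) b \<and> lo P (xs @ [x]) b + P (xs @ [x], b) \<le> 1"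
      unfolding b by blast
  qed
  have p2: "\<forall>U\<in>{0..<1}. \<exists>b\<in>LL m (length (xs @ [x])). U \<in> Iv P (xs @ [x]) b"
  proof
    fix U :: real assume "U \<in> {0..<1}"
    then obtain a where a: "a \<in> LL m ?k" and Ua: "U \<in> Iv P xs a" using IH by blast
    have "S a 0 = 0" unfolding S_def by simp
    then have "(\<lambda>j. lo P xs a + S a j) 0 \<le> U" "U < (\<lambda>j. lo P xs a + S a j) m"
      using Ua Sm_end[OF a] unfolding Iv_def by auto
    then obtain j where j: "j < m" "lo P xs a + S a j \<le> U" "U < lo P xs a + S a (Suc j)"
      using step_find[of "\<lambda>j. lo P xs a + S a j" U m] by auto
    have "a @ [j] \<in> LL m (length (xs @ [x]))" using LL_snoc[OF a j(1)] by simp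
    moreover have "U \<in> Iv P (xs @ [x]) (a @ [j])" unfolding Iv'[OF a j(1)] using j by auto
    ultimately show "\<exists>b\<in>LL m (length (xs @ [x])). U \<in> Iv P (xs @ [x]) b" by blast
  qed
  have p3: "\<forall>b1\<in>LL m (length (xs @ [x])). \<forall>b2\<in>LL m (length (xs @ [x])). \<forall>U.
      U \<in> Iv P (xs @ [x]) b1 \<longrightarrow> U \<in> Iv P (xs @ [x]) b2 \<longrightarrow> b1 = b2"
  proof (intro ballI allI impI)
    fix b1 b2 U
    assume b1L: "b1 \<in> LL m (length (xs @ [x]))" and b2L: "b2 \<in> LL m (length (xs @ [x]))"
      and U1: "U \<in> Iv P (xs @ [x]) b1" and U2: "U \<in> Iv P (xs @ [x]) b2"
    obtain a1 j1 where b1: "b1 = a1 @ [j1]" and a1: "a1 \<in> LL m ?k" and j1: "j1 < m"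
      using LL_Suc_decomp b1L by (metis length_append_singleton)
    obtain a2 j2 where b2: "b2 = a2 @ [j2]" and a2: "a2 \<in> LL m ?k" and j2: "j2 < m"
      using LL_Suc_decomp b2L by (metis length_append_singleton)
    have "U \<in> Iv P xs a1" using Iv_prefix[OF snoc.prems a1 j1] U1 b1 by auto
    moreover have "U \<in> Iv P xs a2" using Iv_prefix[OF snoc.prems a2 j2] U2 b2 by auto
    ultimately have aeq: "a1 = a2" using IH a1 a2 by blast
    have I1: "lo P xs a1 + S a1 j1 \<le> U" "U < lo P xs a1 + S a1 (Suc j1)"
      using U1 unfolding b1 Iv'[OF a1 j1] by auto
    have I2: "lo P xs a1 + S a1 j2 \<le> U" "U < lo P xs a1 + S a1 (Suc j2)"
      using U2 unfolding b2 aeq[symmetric] Iv'[OF a1 j2] by auto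
    have "j1 = j2"
    proof (rule ccontr)
      assume "j1 \<noteq> j2"
      then consider "Suc j1 \<le> j2" | "Suc j2 \<le> j1" by linarith
      then show False
      proof cases
        case 1 then have "S a1 (Suc j1) \<le> S a1 j2" using Sm[OF a1] j2 by auto
        then show False using I1 I2 by linarith
      next
        case 2 then have "S a1 (Suc j2) \<le> S a1 j1" using Sm[OF a1] j1 by auto
        then show False using I1 I2 by linarith
      qed
    qed
    then show "b1 = b2" using b1 b2 aeq by simp
  qed
  show ?case using p1 p2 p3 by blast
qed


lemma sel_eq:
  assumes nn: "nonneg_input xs" and a: "a \<in> LL m (length xs)" and U: "U \<in> Iv P xs a"
  shows "sel m P xs U = a"
  unfolding sel_def
proof (rule the_equality)
  show "a \<in> LL m (length xs) \<and> U \<in> Iv P xs a" using a U by blast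
next
  fix b assume "b \<in> LL m (length xs) \<and> U \<in> Iv P xs b"
  then show "b = a" using partition[OF nn] a U by blast
qed

lemma sel_prop:
  assumes nn: "nonneg_input xs" and U: "U \<in> {0..<1}"
  shows "sel m P xs U \<in> LL m (length xs) \<and> U \<in> Iv P xs (sel m P xs U)"
proof -
  obtain a where "a \<in> LL m (length xs)" "U \<in> Iv P xs a" using partition[OF nn] U by blast
  then show ?thesis using sel_eq[OF nn] by simp
qed

lemma Iv_sub:
  assumes nn: "nonneg_input xs" and a: "a \<in> LL m (length xs)"
  shows "Iv P xs a \<subseteq> {0..<1}"
  using partition[OF nn] a unfolding Iv_def by fastforce

lemma prefix_all:
  "nonneg_input xs \<Longrightarrow> a \<in> LL m (length xs) \<Longrightarrow> U \<in> Iv P xs a \<Longrightarrow> i \<le> length xs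
    \<Longrightarrow> U \<in> Iv P (take i xs) (take i a)"
proof (induction xs arbitrary: a i rule: rev_induct)
  case Nil
  then show ?case by (simp add: LL_0)
next
  case (snoc x xs)
  obtain a' j where a: "a = a' @ [j]" and a': "a' \<in> LL m (length xs)" and j: "j < m"
    using LL_Suc_decomp snoc.prems(2) by (metis length_append_singleton)
  have la: "length a' = length xs" using a' unfolding LL_def by auto
  have U': "U \<in> Iv P xs a'" using Iv_prefix[OF snoc.prems(1) a' j] snoc.prems(3) a by auto
  show ?case
  proof (cases "i = Suc (length xs)")
    case True
    then show ?thesis using snoc.prems(3) a la by simp
  next
    case False
    then have i: "i \<le> length xs" using snoc.prems(4) by simp
    have "U \<in> Iv P (take i xs) (take i a')"
      using snoc.IH[OF nonneg_snoc[OF snoc.prems(1)] a' U' i] .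
    then show ?thesis using i la a by simp
  qed
qed

lemma Bf_take:
  assumes nn: "nonneg_input xs" and U: "U \<in> {0..<1}" and i: "i < length xs"
  shows "Bf m P U (take (Suc i) xs) = sel m P xs U ! i"
proof -
  define a where "a = sel m P xs U"
  have a: "a \<in> LL m (length xs)" "U \<in> Iv P xs a" using sel_prop[OF nn U] unfolding a_def by auto
  have nn': "nonneg_input (take (Suc i) xs)" using nonneg_take[OF nn] .
  have Ut: "U \<in> Iv P (take (Suc i) xs) (take (Suc i) a)"
    using prefix_all[OF nn a(1) a(2)] i by simp
  have aL: "take (Suc i) a \<in> LL m (length (take (Suc i) xs))"
    using take_LL[OF a(1), of "Suc i"] i by simp
  have "sel m P (take (Suc i) xs) U = take (Suc i) a" using sel_eq[OF nn' aL Ut] .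
  moreover have "take (Suc i) xs \<noteq> []" using i by (cases xs) auto
  moreover have "length a = length xs" using a(1) unfolding LL_def by auto
  moreover have "last (take (Suc i) a) = a ! i"
    using i \<open>length a = length xs\<close> by (simp add: take_Suc_conv_app_nth)
  ultimately show ?thesis unfolding Bf_def a_def[symmetric] using nn' U i
    by simp
qed

lemma alg_Bf:
  assumes nn: "nonneg_input xs" and U: "U \<in> {0..<1}"
  shows "alg_min_load m (Bf m P U) xs = ml m (sel m P xs U) xs"
  unfolding alg_min_load_def ml_def by (rule min_load_cong) (simp add: Bf_take[OF nn U])

lemma Bf_det: "det_alg m (Bf m P U)"
  unfolding det_alg_def
proof (intro allI impI)
  fix xs :: "real list" assume xs: "xs \<noteq> [] \<and> nonneg_input xs"
  show "Bf m P U xs < m"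
  proof (cases "U \<in> {0..<1}")
    case True
    then have "sel m P xs U \<in> LL m (length xs)" using sel_prop xs by blast
    moreover have "sel m P xs U \<noteq> []" using calculation xs unfolding LL_def by auto
    ultimately have "last (sel m P xs U) < m" unfolding LL_def using last_in_set by blast
    then show ?thesis unfolding Bf_def using True xs by simp
  next
    case False
    then show ?thesis using m1 by (auto simp: Bf_def)
  qed
qed

lemma Iv_borel: "Iv P xs a \<in> sets borel"
  unfolding Iv_def by simp

lemma Bf_meas: "(\<lambda>U. Bf m P U xs) \<in> measurable borel (count_space UNIV)"
proof (cases "nonneg_input xs \<and> xs \<noteq> []")
  case False
  then have "(\<lambda>U. Bf m P U xs) = (\<lambda>_. 0)" by (auto simp: Bf_def)
  then show ?thesis by simp
next
  case True
  show ?thesis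
  proof (subst measurable_count_space_eq2_countable, intro conjI ballI)
    show "(\<lambda>U. Bf m P U xs) \<in> space borel \<rightarrow> UNIV" by simp
    fix j :: nat
    have eq: "(\<lambda>U. Bf m P U xs) -` {j} \<inter> space borel =
      ({0..<1} \<inter> (\<Union>a\<in>{a\<in>LL m (length xs). last a = j}. Iv P xs a)) \<union> (if j = 0 then - {0..<1} else {})"
    proof (rule set_eqI)
      fix U :: real
      show "U \<in> (\<lambda>U. Bf m P U xs) -` {j} \<inter> space borel \<longleftrightarrow>
        U \<in> ({0..<1} \<inter> (\<Union>a\<in>{a\<in>LL m (length xs). last a = j}. Iv P xs a)) \<union> (if j = 0 then - {0..<1} else {})"
      proof (cases "U \<in> {0..<1}")
        case U: True
        have sp: "sel m P xs U \<in> LL m (length xs)" "U \<in> Iv P xs (sel m P xs U)"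
          using sel_prop[of xs U] True U by auto
        have "Bf m P U xs = last (sel m P xs U)" unfolding Bf_def using True U by simp
        moreover have "(\<exists>a\<in>{a\<in>LL m (length xs). last a = j}. U \<in> Iv P xs a) \<longleftrightarrow> last (sel m P xs U) = j"
        proof
          assume "\<exists>a\<in>{a\<in>LL m (length xs). last a = j}. U \<in> Iv P xs a"
          then obtain a where "a \<in> LL m (length xs)" "last a = j" "U \<in> Iv P xs a" by blast
          then show "last (sel m P xs U) = j" using sel_eq[of xs a U] True by simp
        next
          assume "last (sel m P xs U) = j"
          then show "\<exists>a\<in>{a\<in>LL m (length xs). last a = j}. U \<in> Iv P xs a" using sp by blast
        qed
        ultimately show ?thesis using U by auto
      next
        case False
        then have "Bf m P U xs = 0" by (auto simp: Bf_def)
        then show ?thesis using False by auto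
      qed
    qed
    have s1: "{0..<1::real} \<in> sets borel" by simp
    have fin: "finite {a\<in>LL m (length xs). last a = j}" using finite_LL by simp
    have s2: "(\<Union>a\<in>{a\<in>LL m (length xs). last a = j}. Iv P xs a) \<in> sets borel"
      using sets.finite_UN[OF fin, of "Iv P xs" borel] Iv_borel by blast
    have s3: "(if j = 0 then - {0..<1::real} else {}) \<in> sets borel"
      using borel_comp[OF s1] by simp
    show "(\<lambda>U. Bf m P U xs) -` {j} \<inter> space borel \<in> sets borel"
      unfolding eq by (rule sets.Un[OF sets.Int[OF s1 s2] s3])
  qed
qed

lemma integral_Bf:
  assumes nn: "nonneg_input xs"
  shows "(\<integral>\<^sup>+U. ennreal (alg_min_load m (Bf m P U) xs) * indicator {0..<1} U \<partial>lborel)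
     = ennreal (\<Sum>a\<in>LL m (length xs). P (xs, a) * ml m a xs)"
proof -
  let ?L = "LL m (length xs)"
  have mlnn: "0 \<le> ml m a xs" for a using min_load_nonneg[OF m1 nn] unfolding ml_def by auto
  have "(\<integral>\<^sup>+U. ennreal (alg_min_load m (Bf m P U) xs) * indicator {0..<1} U \<partial>lborel)
     = (\<integral>\<^sup>+U. (\<Sum>a\<in>?L. ennreal (ml m a xs) * indicator (Iv P xs a) U) \<partial>lborel)"
  proof (rule nn_integral_cong)
    fix U :: real
    show "ennreal (alg_min_load m (Bf m P U) xs) * indicator {0..<1} U
        = (\<Sum>a\<in>?L. ennreal (ml m a xs) * indicator (Iv P xs a) U)"
    proof (cases "U \<in> {0..<1}")
      case True
      have spc: "sel m P xs U \<in> ?L \<and> U \<in> Iv P xs (sel m P xs U)" by (rule sel_prop[OF nn True])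
      note sp = conjunct1[OF spc] conjunct2[OF spc]
      have "(\<Sum>a\<in>?L. ennreal (ml m a xs) * indicator (Iv P xs a) U)
          = (\<Sum>a\<in>?L. if a = sel m P xs U then ennreal (ml m a xs) else 0)"
      proof (rule sum.cong)
        fix a assume a: "a \<in> ?L"
        show "ennreal (ml m a xs) * indicator (Iv P xs a) U = (if a = sel m P xs U then ennreal (ml m a xs) else 0)"
        proof (cases "a = sel m P xs U")
          case True
          then show ?thesis using sp(2) by simp
        next
          case False
          then have "U \<notin> Iv P xs a" using sel_eq[OF nn a, of U] by metis
          then show ?thesis using False by simp
        qed
      qed simp
      also have "\<dots> = ennreal (ml m (sel m P xs U) xs)" using sp(1) finite_LL by (simp add: sum.delta')
      finally show ?thesis using alg_Bf[OF nn True] True by simp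
    next
      case False
      have "U \<notin> Iv P xs a" if "a \<in> ?L" for a using Iv_sub[OF nn that] False by auto
      then show ?thesis using False by simp
    qed
  qed
  also have "\<dots> = (\<Sum>a\<in>?L. \<integral>\<^sup>+U. ennreal (ml m a xs) * indicator (Iv P xs a) U \<partial>lborel)"
    by (rule nn_integral_sum) (use Iv_borel in auto)
  also have "\<dots> = (\<Sum>a\<in>?L. ennreal (P (xs, a) * ml m a xs))"
  proof (rule sum.cong)
    fix a assume a: "a \<in> ?L"
    have "0 \<le> P (xs, a)" using Pnn[OF nn a] .
    then have "emeasure lborel (Iv P xs a) = ennreal (P (xs, a))" unfolding Iv_def by simp
    then show "(\<integral>\<^sup>+U. ennreal (ml m a xs) * indicator (Iv P xs a) U \<partial>lborel) = ennreal (P (xs, a) * ml m a xs)"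
      using \<open>0 \<le> P (xs, a)\<close> mlnn[of a] Iv_borel
      by (simp add: nn_integral_cmult_indicator ennreal_mult mult.commute)
  qed simp
  also have "\<dots> = ennreal (\<Sum>a\<in>?L. P (xs, a) * ml m a xs)"
    using Pnn[OF nn] mlnn by (intro sum_ennreal) auto
  finally show ?thesis .
qed

lemma MB_exists: "\<exists>MB. rand_alg m MB \<and> rand_competitive m c MB"
proof -
  define Uf where "Uf = uniform_measure lborel {0..<1::real}"
  define NB where "NB = restrict_space (PiM (UNIV::real list set) (\<lambda>_. count_space (UNIV::nat set))) {B. det_alg m B}"
  define Phi where "Phi = (\<lambda>U xs. Bf m P U xs)"
  have em: "emeasure lborel {0..<1::real} = 1" by simp
  have prob: "prob_space Uf" unfolding Uf_def by (rule prob_space_uniform_measure) (simp_all add: em)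
  have PhiPi: "Phi \<in> measurable borel (PiM (UNIV::real list set) (\<lambda>_. count_space (UNIV::nat set)))"
  proof -
    show ?thesis unfolding Phi_def
      by (rule measurable_PiM_single'[where I=UNIV and f="\<lambda>xs U. Bf m P U xs" and N=borel
          and M="\<lambda>_. count_space UNIV"]) (auto simp: Bf_meas)
  qed
  have "Phi \<in> space borel \<rightarrow> {B. det_alg m B}" using Bf_det unfolding Phi_def by auto
  then have PhiB: "Phi \<in> measurable borel NB"
    unfolding NB_def by (rule measurable_restrict_space2[OF _ PhiPi])
  have mUf: "measurable Uf NB = measurable borel NB"
    unfolding Uf_def by (rule measurable_cong_sets) auto
  have mlb: "measurable lborel (borel :: ennreal measure) = measurable borel borel"
    by (rule measurable_cong_sets) auto
  have PhiM: "Phi \<in> measurable Uf NB" using PhiB mUf by simp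
  define MB where "MB = distr Uf NB Phi"
  have gm: "(\<lambda>D. ennreal (alg_min_load m D xs)) \<in> borel_measurable NB" for xs
  proof -
    define tr where "tr D = map (\<lambda>i. D (take (Suc i) xs)) [0..<length xs]" for D :: "real list \<Rightarrow> nat"
    have "alg_min_load m D xs = ml m (tr D) xs" for D
      unfolding alg_min_load_def ml_def tr_def by (rule min_load_cong) simp
    then have eq: "(\<lambda>D. ennreal (alg_min_load m D xs)) = (\<lambda>b. ennreal (ml m b xs)) \<circ> tr" by auto
    have trm: "tr \<in> measurable NB (count_space UNIV)" unfolding tr_def NB_def
      by (rule map_meas, rule measurable_restrict_space1, rule measurable_component_singleton) simp
    show ?thesis unfolding eq by (rule measurable_comp[OF trm]) simp
  qed
  have "rand_alg m MB" unfolding rand_alg_def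
  proof (intro conjI ballI allI)
    show "prob_space MB" unfolding MB_def by (rule prob_space.prob_space_distr[OF prob PhiM])
  next
    fix D assume "D \<in> space MB"
    then show "det_alg m D" unfolding MB_def NB_def by (simp add: space_restrict_space)
  next
    fix xs :: "real list"
    show "(\<lambda>D. D xs) \<in> measurable MB (count_space UNIV)" unfolding MB_def NB_def
      by (simp, rule measurable_restrict_space1, rule measurable_component_singleton) simp
  qed
  moreover have "rand_competitive m c MB" unfolding rand_competitive_def
  proof (intro allI impI)
    fix xs :: "real list" assume nn: "nonneg_input xs"
    have "(\<integral>\<^sup>+ D. ennreal (alg_min_load m D xs) \<partial>MB) = (\<integral>\<^sup>+ U. ennreal (alg_min_load m (Phi U) xs) \<partial>Uf)"
      unfolding MB_def by (rule nn_integral_distr[OF PhiM]) (simp add: gm)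
    also have "\<dots> = (\<integral>\<^sup>+U. ennreal (alg_min_load m (Phi U) xs) * indicator {0..<1} U \<partial>lborel) / emeasure lborel {0..<1::real}"
      unfolding Uf_def
    proof (rule nn_integral_uniform_measure)
      show "(\<lambda>U. ennreal (alg_min_load m (Phi U) xs)) \<in> borel_measurable lborel"
        using measurable_comp[OF PhiB gm[of xs]] mlb by (simp add: comp_def)
    qed simp
    also have "\<dots> = ennreal (\<Sum>a\<in>LL m (length xs). P (xs, a) * ml m a xs)"
      unfolding em Phi_def using integral_Bf[OF nn] by (simp add: divide_ennreal_def)
    finally have eq: "(\<integral>\<^sup>+ D. ennreal (alg_min_load m D xs) \<partial>MB) = ennreal (\<Sum>a\<in>LL m (length xs). P (xs, a) * ml m a xs)" .
    show "ennreal (OPT m xs / c) \<le> (\<integral>\<^sup>+ D. ennreal (alg_min_load m D xs) \<partial>MB)"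
      unfolding eq by (rule ennreal_leI[OF Pcomp[OF nn]])
  qed
  ultimately show ?thesis by (intro exI[of _ MB] conjI)
qed

end


theorem proposition18:
  fixes m :: nat and c :: real
  shows "(\<forall>MA. rand_alg_n m MA \<and> rand_competitive_n m c MA \<longrightarrow>
            (\<exists>MB. rand_alg m MB \<and> rand_competitive m c MB))
       \<and> (\<forall>A. det_alg_n m A \<and> det_competitive_n m c A \<longrightarrow>
            (\<exists>B. det_alg m B \<and> det_competitive m c B))"
proof (intro conjI allI impI)
  fix MA assume h: "rand_alg_n m MA \<and> rand_competitive_n m c MA"
  have r: "m \<ge> 1 \<and> (\<exists>P. \<forall>xs. nonneg_input xs \<longrightarrow> P \<in> CP m c xs)"
    using rand_to_P[of m MA c] h by (elim conjE) assumption
  then obtain P where m1: "m \<ge> 1" and P: "\<forall>xs. nonneg_input xs \<longrightarrow> P \<in> CP m c xs"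
    by (elim conjE exE)
  show "\<exists>MB. rand_alg m MB \<and> rand_competitive m c MB"
    by (rule MB_exists[where m=m and c=c and P=P, OF m1]) (use P in simp)
next
  fix A assume h: "det_alg_n m A \<and> det_competitive_n m c A"
  show "\<exists>B. det_alg m B \<and> det_competitive m c B"
    using det_part[of m A c] h by (elim conjE) assumption
qed

end
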